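(* With $r^2=x^2+p^2$, let $W_0=\frac1\pi e^{-r^2}$, $W_b=\frac1\pi e^{-r^2}r^2$, $W_c=\frac1\pi e^{-r^2}(r^2-1)^2$, $W_d=\frac1\pi e^{-r^2}\tfrac12 r^4$, and for $t\in[0,1]$, $V_t=\frac{t+1}{2\pi}e^{-r^2}\big(r^2-1+\sqrt{(1-t)/(1+t)}\big)^2$, all as functions on $\mathbb{R}^2$. Then $W_0\succ W_b$, $W_0\succ W_c$, $W_0\succ W_d$, and $W_0\succ V_t$ for every $t\in[0,1]$.
   Context: Majorization on $\mathbb{R}^2$ (Lebesgue measure): $f\succ g$ means $\int f=\int g$ and $\int[f-t]_+\ge\int[g-t]_+$ for all $t\ge0$, where $[z]_+=\max(z,0)$. *)

theory Defs
  imports "HOL-Analysis.Analysis"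
begin

definition majorizes :: "(real \<times> real \<Rightarrow> real) \<Rightarrow> (real \<times> real \<Rightarrow> real) \<Rightarrow> bool" where
  "majorizes f g \<longleftrightarrow>
     integrable lborel f \<and> integrable lborel g \<and>
     (\<integral>z. f z \<partial>lborel) = (\<integral>z. g z \<partial>lborel) \<and>
     (\<forall>t::real. t \<ge> 0 \<longrightarrow>
        (\<integral>z. max (f z - t) 0 \<partial>lborel) \<ge> (\<integral>z. max (g z - t) 0 \<partial>lborel))"

definition rsq :: "real \<times> real \<Rightarrow> real" where
  "rsq z = (fst z)\<^sup>2 + (snd z)\<^sup>2"

definition W0 :: "real \<times> real \<Rightarrow> real" where
  "W0 z = 1 / pi * exp (- rsq z)"

definition Wb :: "real \<times> real \<Rightarrow> real" where
  "Wb z = 1 / pi * exp (- rsq z) * rsq z"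

definition Wc :: "real \<times> real \<Rightarrow> real" where
  "Wc z = 1 / pi * exp (- rsq z) * (rsq z - 1)\<^sup>2"

definition Wd :: "real \<times> real \<Rightarrow> real" where
  "Wd z = 1 / pi * exp (- rsq z) * (1/2 * (rsq z)\<^sup>2)"

definition Vt :: "real \<Rightarrow> real \<times> real \<Rightarrow> real" where
  "Vt t z = (t + 1) / (2 * pi) * exp (- rsq z) *
            (rsq z - 1 + sqrt ((1 - t) / (1 + t)))\<^sup>2"

end

theory Submission
  imports Defs "HOL-Probability.Distributions"
begin

lemma rsq_meas[measurable]: "rsq \<in> borel_measurable borel"
  unfolding rsq_def by (intro borel_measurable_continuous_onI continuous_intros)

lemma rsq_ge0: "rsq z \<ge> 0" unfolding rsq_def by simp

lemma rsq_le_iff: "0 \<le> a \<Longrightarrow> rsq z \<le> a \<longleftrightarrow> z \<in> cball 0 (sqrt a)"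
proof -
  assume a: "0 \<le> a"
  have "z \<in> cball 0 (sqrt a) \<longleftrightarrow> norm z \<le> sqrt a" by (simp add: dist_norm)
  also have "norm z = sqrt (rsq z)"
    by (cases z) (simp add: norm_Pair rsq_def)
  also have "sqrt (rsq z) \<le> sqrt a \<longleftrightarrow> rsq z \<le> a" by simp
  finally show ?thesis by simp
qed

lemma emeasure_rsq_atMost:
  "emeasure (distr lborel borel rsq) {..a} = ennreal (pi * max a 0)"
proof (cases "a < 0")
  case True
  then have "\<forall>z. \<not> rsq z \<le> a" using rsq_ge0 by (meson le_less_trans not_less)
  then have "rsq -` {..a} = {}" by auto
  then show ?thesis using True by (simp add: emeasure_distr)
next
  case False
  then have a: "0 \<le> a" by simp
  have "rsq -` {..a} = cball 0 (sqrt a)" using rsq_le_iff[OF a] by auto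
  then have "emeasure (distr lborel borel rsq) {..a} = emeasure lborel (cball (0::real\<times>real) (sqrt a))"
    by (simp add: emeasure_distr)
  also have "\<dots> = ennreal (unit_ball_vol (DIM(real\<times>real)) * sqrt a ^ DIM(real\<times>real))"
    by (rule emeasure_cball) (simp add: a)
  also have "\<dots> = ennreal (pi * max a 0)" using a by (simp add: unit_ball_vol_2)
  finally show ?thesis .
qed

lemma emeasure_dens_atMost:
  "emeasure (density lborel (\<lambda>s. pi * indicator {0..} s)) {..a} = ennreal (pi * max a 0)"
proof -
  have "emeasure (density lborel (\<lambda>s. pi * indicator {0..} s)) {..a}
     = (\<integral>\<^sup>+ s. ennreal pi * indicator {0..a} s \<partial>lborel)"
    by (subst emeasure_density) (auto intro!: nn_integral_cong simp: indicator_def ennreal_mult)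
  also have "\<dots> = ennreal pi * emeasure lborel {0..a}"
    by (simp add: nn_integral_cmult)
  also have "\<dots> = ennreal (pi * max a 0)"
    by (cases "a < 0") (auto simp: ennreal_mult)
  finally show ?thesis .
qed

lemma distr_rsq: "distr lborel borel rsq = density lborel (\<lambda>s. pi * indicator {0..} s)"
proof -
  have S: "sets (borel::real measure) = sigma_sets UNIV (range atMost)"
    by (subst borel_eq_atMost) (simp add: sets_measure_of)
  show ?thesis
proof (rule measure_eqI_generator_eq[where E="range atMost" and \<Omega>=UNIV and A="\<lambda>n. {..real n}"])
  show "Int_stable (range atMost :: real set set)"
    by (auto simp: Int_stable_def intro!: exI[of _ "min _ _"])
  show "range atMost \<subseteq> Pow (UNIV::real set)" by simp
  show "\<And>X. X \<in> range atMost \<Longrightarrow> emeasure (distr lborel borel rsq) X =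
       emeasure (density lborel (\<lambda>s. pi * indicator {0..} s)) X"
    using emeasure_rsq_atMost emeasure_dens_atMost by auto
  show "sets (distr lborel borel rsq) = sigma_sets UNIV (range atMost)"
    using S by simp
  show "sets (density lborel (\<lambda>s::real. pi * indicator {0..} s)) = sigma_sets UNIV (range atMost)"
    using S by simp
  show "range (\<lambda>n. {..real n}) \<subseteq> range atMost" by auto
  show "(\<Union>n. {..real n}) = UNIV" by (auto intro: real_arch_simple)
  show "\<And>n. emeasure (distr lborel borel rsq) {..real n} \<noteq> \<infinity>"
    using emeasure_rsq_atMost by simp
qed
qed

lemma rsq_meas_lborel[measurable]: "rsq \<in> measurable lborel borel"
  using rsq_meas by simp

lemma radial_integrable:
  fixes H :: "real \<Rightarrow> real"
  assumes [measurable]: "H \<in> borel_measurable borel"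
  shows "integrable lborel (\<lambda>z. H (rsq z)) \<longleftrightarrow> integrable lborel (\<lambda>s. indicator {0..} s * H s)"
proof -
  have "integrable lborel (\<lambda>z. H (rsq z)) \<longleftrightarrow> integrable (distr lborel borel rsq) H"
    using integrable_distr_eq[of rsq lborel borel H] by simp
  also have "\<dots> \<longleftrightarrow> integrable lborel (\<lambda>s. (pi * indicator {0..} s) *\<^sub>R H s)"
    unfolding distr_rsq by (rule integrable_density) auto
  also have "\<dots> \<longleftrightarrow> integrable lborel (\<lambda>s. pi * (indicator {0..} s * H s))"
    by (simp add: mult.assoc)
  also have "\<dots> \<longleftrightarrow> integrable lborel (\<lambda>s. indicator {0..} s * H s)"
    by (subst integrable_mult_left_iff) simp
  finally show ?thesis .
qed

lemma radial_integral:
  fixes H :: "real \<Rightarrow> real"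
  assumes [measurable]: "H \<in> borel_measurable borel"
  shows "(\<integral>z. H (rsq z) \<partial>lborel) = pi * (\<integral>s. indicator {0..} s * H s \<partial>lborel)"
proof -
  have "(\<integral>z. H (rsq z) \<partial>lborel) = integral\<^sup>L (distr lborel borel rsq) H"
    by (rule integral_distr[symmetric]) measurable
  also have "\<dots> = (\<integral>s. (pi * indicator {0..} s) *\<^sub>R H s \<partial>lborel)"
    unfolding distr_rsq by (rule integral_density) auto
  also have "\<dots> = (\<integral>s. pi * (indicator {0..} s * H s) \<partial>lborel)"
    by (simp add: mult.assoc)
  also have "\<dots> = pi * (\<integral>s. indicator {0..} s * H s \<partial>lborel)"
    by simp
  finally show ?thesis .
qed

lemma mom:
  fixes i :: nat
  shows "has_bochner_integral lborel (\<lambda>s::real. (indicator {0..} s::real) * (exp (-s) * s ^ i)) (fact i)"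
proof -
  have eq: "\<And>s. erlang_density 0 1 s * s ^ i = (indicator {0..} s::real) * (exp (-s) * s ^ i)"
    by (auto simp: erlang_density_def indicator_def)
  have "has_bochner_integral lborel (\<lambda>s. erlang_density 0 1 s * s ^ i) (fact i)"
  proof (rule has_bochner_integral_nn_integral)
    show "(\<lambda>s. erlang_density 0 1 s * s ^ i) \<in> borel_measurable lborel"
      unfolding eq by measurable
    show "AE x in lborel. 0 \<le> erlang_density 0 1 x * x ^ i"
      unfolding eq by (auto simp: indicator_def)
    show "(0::real) \<le> fact i" by simp
    show "(\<integral>\<^sup>+ x. ennreal (erlang_density 0 1 x * x ^ i) \<partial>lborel) = ennreal (fact i)"
      using nn_integral_erlang_ith_moment[of 1 0 i] by simp
  qed
  then show ?thesis unfolding eq .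
qed

lemma poly_int:
  fixes a0 a1 a2 :: real
  shows "has_bochner_integral lborel (\<lambda>s::real. (indicator {0..} s::real) * (exp (-s) * (a0 + a1 * s + a2 * s ^ 2))) (a0 + a1 + 2*a2)"
proof -
  have "has_bochner_integral lborel (\<lambda>s::real. a0 * ((indicator {0..} s::real) * (exp (-s) * s ^ 0)) +
     a1 * (indicator {0..} s * (exp (-s) * s ^ 1)) + a2 * (indicator {0..} s * (exp (-s) * s ^ 2)))
     (a0 * fact 0 + a1 * fact 1 + a2 * fact 2)"
    by (intro has_bochner_integral_add has_bochner_integral_mult_right mom)
  moreover have "(\<lambda>s::real. a0 * ((indicator {0..} s::real) * (exp (-s) * s ^ 0)) +
     a1 * (indicator {0..} s * (exp (-s) * s ^ 1)) + a2 * (indicator {0..} s * (exp (-s) * s ^ 2)))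
    = (\<lambda>s::real. (indicator {0..} s::real) * (exp (-s) * (a0 + a1 * s + a2 * s ^ 2)))"
    by (auto simp: algebra_simps)
  ultimately show ?thesis by (simp add: numeral_2_eq_2 mult.commute)
qed

definition phi :: "real \<Rightarrow> real \<Rightarrow> real" where
  "phi \<tau> y = (if y \<le> \<tau> then -\<tau> + \<tau> * ln \<tau> else -y + \<tau> * ln y)"

definition dphi :: "real \<Rightarrow> real \<Rightarrow> real" where
  "dphi \<tau> y = (if y \<le> \<tau> then 0 else -1 + \<tau> / y)"

lemma h_deriv: "0 < y \<Longrightarrow> ((\<lambda>y. -y + \<tau> * ln y) has_real_derivative (-1 + \<tau> / y)) (at y)"
  by (auto intro!: derivative_eq_intros simp: field_simps)

lemma phi_deriv:
  assumes "0 < \<tau>" "0 < y"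
  shows "(phi \<tau> has_real_derivative dphi \<tau> y) (at y)"
proof (cases "y < \<tau>")
  case True
  have "((\<lambda>_. -\<tau> + \<tau> * ln \<tau>) has_real_derivative 0) (at y)" by simp
  moreover have "dphi \<tau> y = 0" using True by (simp add: dphi_def)
  ultimately show ?thesis
    apply (simp only:)
    by (rule has_field_derivative_transform_within_open[where S="{..<\<tau>}"]) (use True in \<open>auto simp: phi_def dphi_def\<close>)
next
  case False
  show ?thesis
  proof (cases "y = \<tau>")
    case False
    with \<open>\<not> y < \<tau>\<close> have yt: "\<tau> < y" by simp
    have "((\<lambda>y. -y + \<tau> * ln y) has_real_derivative (-1 + \<tau> / y)) (at y)"
      using assms by (intro h_deriv) auto
    moreover have "dphi \<tau> y = -1 + \<tau> / y" using yt by (simp add: dphi_def)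
    ultimately show ?thesis
      apply (simp only:)
      by (rule has_field_derivative_transform_within_open[where S="{\<tau><..}"]) (use yt in \<open>auto simp: phi_def dphi_def\<close>)
  next
    case True
    have d0: "dphi \<tau> y = 0" using True by (simp add: dphi_def)
    have hd: "((\<lambda>y. -y + \<tau> * ln y) has_real_derivative 0) (at \<tau>)"
      using h_deriv[of \<tau> \<tau>] assms by simp
    have hl: "((\<lambda>x. ((-x + \<tau> * ln x) - (-\<tau> + \<tau> * ln \<tau>)) / (x - \<tau>)) \<longlongrightarrow> 0) (at \<tau>)"
      using hd unfolding has_field_derivative_iff by simp
    have "((\<lambda>x. (phi \<tau> x - phi \<tau> \<tau>) / (x - \<tau>)) \<longlongrightarrow> 0) (at \<tau>)"
    proof (rule filterlim_split_at)
      show "((\<lambda>x. (phi \<tau> x - phi \<tau> \<tau>) / (x - \<tau>)) \<longlongrightarrow> 0) (at_left \<tau>)"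
        by (rule tendsto_eventually) (auto simp: phi_def eventually_at_left_field intro: exI[of _ "\<tau> - 1"])
      have conv: "((\<lambda>x. ((-x + \<tau> * ln x) - (-\<tau> + \<tau> * ln \<tau>)) / (x - \<tau>)) \<longlongrightarrow> 0) (at_right \<tau>)"
        using hl by (rule filterlim_mono) (simp_all add: at_within_le_at)
      have ev: "\<forall>\<^sub>F x in at_right \<tau>. ((-x + \<tau> * ln x) - (-\<tau> + \<tau> * ln \<tau>)) / (x - \<tau>)
          = (phi \<tau> x - phi \<tau> \<tau>) / (x - \<tau>)"
        by (auto simp: phi_def eventually_at_right_field intro: exI[of _ "\<tau> + 1"])
      show "((\<lambda>x. (phi \<tau> x - phi \<tau> \<tau>) / (x - \<tau>)) \<longlongrightarrow> 0) (at_right \<tau>)"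
        by (rule Lim_transform_eventually[OF conv ev])
    qed
    then show ?thesis using True d0 unfolding has_field_derivative_iff by simp
  qed
qed

lemma ftc_generic:
  fixes g T :: "real \<Rightarrow> real" and \<tau> :: real
  assumes tau: "0 < \<tau>"
    and gm[measurable]: "g \<in> borel_measurable borel" and Tm[measurable]: "T \<in> borel_measurable borel"
    and dT: "\<And>s. (T has_real_derivative - g s) (at s)"
    and g0: "\<And>s. 0 \<le> s \<Longrightarrow> 0 \<le> g s" and T0: "\<And>s. 0 \<le> s \<Longrightarrow> 0 < T s"
    and T1: "T 0 = 1" and Tlim: "(T \<longlongrightarrow> 0) at_top"
  shows "(\<integral>\<^sup>+s. ennreal (dphi \<tau> (T s) * (- g s)) * indicator {0..} s \<partial>lborel)
         = ennreal ((-\<tau> + \<tau> * ln \<tau>) - phi \<tau> 1)"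
proof -
  have "(\<integral>\<^sup>+s. ennreal (dphi \<tau> (T s) * (- g s)) * indicator {0..} s \<partial>lborel)
         = ennreal ((-\<tau> + \<tau> * ln \<tau>) - phi \<tau> (T 0))"
  proof (rule nn_integral_FTC_atLeast)
    show "(\<lambda>s. dphi \<tau> (T s) * - g s) \<in> borel_measurable borel"
      unfolding dphi_def by measurable
    fix x :: real assume x: "0 \<le> x"
    show "((\<lambda>s. phi \<tau> (T s)) has_real_derivative dphi \<tau> (T x) * - g x) (at x)"
      by (rule DERIV_chain2[OF phi_deriv[OF tau T0[OF x]] dT])
    show "0 \<le> dphi \<tau> (T x) * - g x"
    proof (cases "T x \<le> \<tau>")
      case False
      then have "\<tau> / T x \<le> 1" using tau by (simp add: divide_le_eq_1)
      then show ?thesis using False g0[OF x] by (simp add: dphi_def mult_nonpos_nonneg)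
    qed (simp add: dphi_def)
  next
    have "\<forall>\<^sub>F s in at_top. T s < \<tau>" using order_tendstoD(2)[OF Tlim tau] .
    then have "\<forall>\<^sub>F s in at_top. phi \<tau> (T s) = -\<tau> + \<tau> * ln \<tau>"
      by eventually_elim (simp add: phi_def)
    then show "((\<lambda>s. phi \<tau> (T s)) \<longlongrightarrow> -\<tau> + \<tau> * ln \<tau>) at_top"
      by (rule tendsto_eventually)
  qed
  then show ?thesis using T1 by simp
qed

lemma exp_dphi: "dphi \<tau> (exp (-s)) * (- exp (-s)) = max (exp (-s) - \<tau>) 0"
proof (cases "exp (-s) \<le> \<tau>")
  case True then show ?thesis by (simp add: dphi_def)
next
  case False
  have "(-1 + \<tau> / exp (-s)) * (- exp (-s)) = exp (-s) - \<tau>"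
    by (simp add: algebra_simps)
  then show ?thesis using False by (simp add: dphi_def)
qed

lemma em: "(\<lambda>s::real. exp (-s)) \<in> borel_measurable borel"
  by (intro borel_measurable_continuous_onI continuous_intros)

lemma exp_deriv: "((\<lambda>s. exp (-s)) has_real_derivative - exp (-s)) (at s)"
  by (auto intro!: derivative_eq_intros)

lemma exp_lim: "((\<lambda>s::real. exp (-s)) \<longlongrightarrow> 0) at_top"
  using filterlim_compose[OF exp_at_bot filterlim_uminus_at_bot_at_top] by simp

lemma exp_nn_eq:
  fixes \<tau> :: real assumes tau: "0 < \<tau>"
  shows "(\<integral>\<^sup>+s. ennreal (max (exp (-s) - \<tau>) 0) * indicator {0..} s \<partial>lborel)
     = ennreal ((-\<tau> + \<tau> * ln \<tau>) - phi \<tau> 1)"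
proof -
  have "(\<integral>\<^sup>+s. ennreal (max (exp (-s) - \<tau>) 0) * indicator {0..} s \<partial>lborel)
     = (\<integral>\<^sup>+s. ennreal (dphi \<tau> (exp (-s)) * (- exp (-s))) * indicator {0..} s \<partial>lborel)"
    by (simp only: exp_dphi)
  also have "\<dots> = ennreal ((-\<tau> + \<tau> * ln \<tau>) - phi \<tau> 1)"
    by (rule ftc_generic[OF tau em em exp_deriv _ _ _ exp_lim]) auto
  finally show ?thesis .
qed

lemma exp_nn_fin:
  fixes \<tau> :: real assumes tau: "0 < \<tau>"
  shows "(\<integral>\<^sup>+s. ennreal (max (exp (-s) - \<tau>) 0) * indicator {0..} s \<partial>lborel) < \<infinity>"
  using exp_nn_eq[OF tau] by simp

lemma pw_bound:
  fixes g T :: "real \<Rightarrow> real" and \<tau> s :: real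
  assumes tau: "0 < \<tau>" and g0: "0 \<le> g s" and T0: "0 < T s" and gT: "g s \<le> T s"
  shows "max (g s - \<tau>) 0 \<le> dphi \<tau> (T s) * (- g s)"
proof (cases "T s \<le> \<tau>")
  case True
  then show ?thesis using gT by (simp add: dphi_def)
next
  case False
  have "g s * \<tau> \<le> T s * \<tau>" using mult_right_mono[OF gT] tau by simp
  then have A: "g s * \<tau> / T s \<le> \<tau>" using T0 by (simp add: divide_le_eq mult.commute)
  have tT: "\<tau> \<le> T s" using False by simp
  have "g s * \<tau> \<le> g s * T s" using mult_left_mono[OF tT g0] .
  then have B: "g s * \<tau> / T s \<le> g s" using T0 by (simp add: divide_le_eq)
  have C: "dphi \<tau> (T s) * (- g s) = g s - g s * \<tau> / T s"
    using False by (simp add: dphi_def algebra_simps)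
  show ?thesis unfolding C using A B by linarith
qed

lemma key_cmp:
  fixes g T :: "real \<Rightarrow> real" and \<tau> :: real
  assumes tau: "0 < \<tau>"
    and gm[measurable]: "g \<in> borel_measurable borel" and Tm[measurable]: "T \<in> borel_measurable borel"
    and dT: "\<And>s. (T has_real_derivative - g s) (at s)"
    and g0: "\<And>s. 0 \<le> s \<Longrightarrow> 0 \<le> g s" and T0: "\<And>s. 0 \<le> s \<Longrightarrow> 0 < T s"
    and T1: "T 0 = 1" and Tlim: "(T \<longlongrightarrow> 0) at_top"
    and gT: "\<And>s. 0 \<le> s \<Longrightarrow> g s \<le> T s"
  shows "(\<integral>\<^sup>+s. ennreal (max (g s - \<tau>) 0) * indicator {0..} s \<partial>lborel)
       \<le> (\<integral>\<^sup>+s. ennreal (max (exp (-s) - \<tau>) 0) * indicator {0..} s \<partial>lborel)"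
proof -
  have "(\<integral>\<^sup>+s. ennreal (max (g s - \<tau>) 0) * indicator {0..} s \<partial>lborel)
      \<le> (\<integral>\<^sup>+s. ennreal (dphi \<tau> (T s) * (- g s)) * indicator {0..} s \<partial>lborel)"
  proof (rule nn_integral_mono)
    fix s :: real
    show "ennreal (max (g s - \<tau>) 0) * indicator {0..} s \<le> ennreal (dphi \<tau> (T s) * (- g s)) * indicator {0..} s"
    proof (cases "0 \<le> s")
      case s: True
      have "ennreal (max (g s - \<tau>) 0) \<le> ennreal (dphi \<tau> (T s) * (- g s))"
        by (rule ennreal_leI) (rule pw_bound[of \<tau> g s T, OF tau g0[OF s] T0[OF s] gT[OF s]])
      then show ?thesis using s by simp
    qed simp
  qed
  also have "\<dots> = ennreal ((-\<tau> + \<tau> * ln \<tau>) - phi \<tau> 1)"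
    by (rule ftc_generic[OF tau gm Tm dT g0 T0 T1 Tlim])
  also have "\<dots> = (\<integral>\<^sup>+s. ennreal (max (exp (-s) - \<tau>) 0) * indicator {0..} s \<partial>lborel)"
    by (rule exp_nn_eq[OF tau, symmetric])
  finally show ?thesis .
qed

lemma poly_T_lim: "((\<lambda>s::real. exp (-s) * (1 + B * s + C * s^2)) \<longlongrightarrow> 0) at_top"
proof -
  have "((\<lambda>s::real. exp (-s) + B * (s ^ 1 / exp s) + C * (s ^ 2 / exp s)) \<longlongrightarrow> 0 + B * 0 + C * 0) at_top"
    by (intro tendsto_add tendsto_mult tendsto_const exp_lim tendsto_power_div_exp_0)
  moreover have "\<And>s::real. exp (-s) + B * (s ^ 1 / exp s) + C * (s ^ 2 / exp s) = exp (-s) * (1 + B * s + C * s^2)"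
    by (simp add: exp_minus field_simps)
  ultimately show ?thesis by simp
qed

lemma poly_cmp:
  fixes a0 a1 a2 \<tau> :: real
  assumes tau: "0 < \<tau>" and sum1: "a0 + a1 + 2*a2 = 1"
    and nn: "\<And>s. 0 \<le> s \<Longrightarrow> 0 \<le> a0 + a1 * s + a2 * s^2"
    and dom: "\<And>s. 0 \<le> s \<Longrightarrow> 0 \<le> a1 + 2*a2 + 2*a2 * s"
    and pos: "\<And>s. 0 \<le> s \<Longrightarrow> 0 < 1 + (a1 + 2*a2) * s + a2 * s^2"
  shows "(\<integral>\<^sup>+s. ennreal (max (exp (-s) * (a0 + a1 * s + a2 * s^2) - \<tau>) 0) * indicator {0..} s \<partial>lborel)
       \<le> (\<integral>\<^sup>+s. ennreal (max (exp (-s) - \<tau>) 0) * indicator {0..} s \<partial>lborel)"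
proof (rule key_cmp[OF tau, where T="\<lambda>s. exp (-s) * (1 + (a1 + 2*a2) * s + a2 * s^2)"])
  have a0: "a0 = 1 - a1 - 2*a2" using sum1 by simp
  show "(\<lambda>s. exp (-s) * (a0 + a1 * s + a2 * s^2)) \<in> borel_measurable borel"
    by (intro borel_measurable_continuous_onI continuous_intros)
  show "(\<lambda>s. exp (-s) * (1 + (a1 + 2*a2) * s + a2 * s^2)) \<in> borel_measurable borel"
    by (intro borel_measurable_continuous_onI continuous_intros)
  show "((\<lambda>s. exp (-s) * (1 + (a1 + 2*a2) * s + a2 * s^2)) \<longlongrightarrow> 0) at_top"
    by (rule poly_T_lim)
  show "exp (-0) * (1 + (a1 + 2*a2) * 0 + a2 * 0^2) = (1::real)" by simp
  fix s :: real
  have dp: "((\<lambda>s. 1 + (a1 + 2*a2) * s + a2 * s^2) has_real_derivative ((a1 + 2*a2) + 2 * a2 * s)) (at s)"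
    by (auto intro!: derivative_eq_intros)
  have d: "((\<lambda>s. exp (-s) * (1 + (a1 + 2*a2) * s + a2 * s^2)) has_real_derivative
      (- exp (-s) * (1 + (a1 + 2*a2) * s + a2 * s^2) + ((a1 + 2*a2) + 2 * a2 * s) * exp (-s))) (at s)"
    by (rule DERIV_mult[OF exp_deriv dp])
  have eq: "- exp (-s) * (1 + (a1 + 2*a2) * s + a2 * s^2) + ((a1 + 2*a2) + 2 * a2 * s) * exp (-s)
      = - (exp (-s) * (a0 + a1 * s + a2 * s^2))"
    by (simp add: a0 algebra_simps power2_eq_square)
  show "((\<lambda>s. exp (-s) * (1 + (a1 + 2*a2) * s + a2 * s^2)) has_real_derivative
        - (exp (-s) * (a0 + a1 * s + a2 * s^2))) (at s)"
    by (rule DERIV_cong[OF d eq])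
  assume s: "0 \<le> s"
  show "0 \<le> exp (-s) * (a0 + a1 * s + a2 * s^2)" using nn[OF s] by simp
  show "0 < exp (-s) * (1 + (a1 + 2*a2) * s + a2 * s^2)" using pos[OF s] by simp
  have "exp (-s) * (1 + (a1 + 2*a2) * s + a2 * s^2) - exp (-s) * (a0 + a1 * s + a2 * s^2)
      = exp (-s) * (a1 + 2*a2 + 2*a2 * s)"
    by (simp add: a0 algebra_simps power2_eq_square)
  moreover have "0 \<le> exp (-s) * (a1 + 2*a2 + 2*a2 * s)" using dom[OF s] by simp
  ultimately show "exp (-s) * (a0 + a1 * s + a2 * s^2) \<le> exp (-s) * (1 + (a1 + 2*a2) * s + a2 * s^2)"
    by linarith
qed

definition Hp :: "real \<Rightarrow> real \<Rightarrow> real \<Rightarrow> real \<Rightarrow> real" where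
  "Hp a0 a1 a2 s = 1/pi * (exp (-s) * (a0 + a1 * s + a2 * s^2))"

lemma Hp_meas[measurable]: "Hp a0 a1 a2 \<in> borel_measurable borel"
  unfolding Hp_def by measurable

lemma prof_int:
  "integrable lborel (\<lambda>z. Hp a0 a1 a2 (rsq z)) \<and> (\<integral>z. Hp a0 a1 a2 (rsq z) \<partial>lborel) = a0 + a1 + 2*a2"
proof -
  have hb: "has_bochner_integral lborel (\<lambda>s::real. 1/pi * ((indicator {0..} s::real) * (exp (-s) * (a0 + a1 * s + a2 * s ^ 2)))) (1/pi * (a0 + a1 + 2*a2))"
    by (intro has_bochner_integral_mult_right poly_int)
  have eq: "(\<lambda>s::real. 1/pi * ((indicator {0..} s::real) * (exp (-s) * (a0 + a1 * s + a2 * s ^ 2))))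
      = (\<lambda>s. indicator {0..} s * Hp a0 a1 a2 s)"
    by (auto simp: Hp_def)
  have hb': "has_bochner_integral lborel (\<lambda>s. indicator {0..} s * Hp a0 a1 a2 s) (1/pi * (a0 + a1 + 2*a2))"
    using hb unfolding eq .
  show ?thesis
    using radial_integrable[of "Hp a0 a1 a2"] radial_integral[of "Hp a0 a1 a2"]
      integrable.intros[OF hb'] has_bochner_integral_integral_eq[OF hb']
    by simp
qed

lemma max_2d:
  fixes t :: real
  shows "(\<integral>z. max (Hp a0 a1 a2 (rsq z) - t) 0 \<partial>lborel)
     = enn2real (\<integral>\<^sup>+s. ennreal (max (exp (-s) * (a0 + a1 * s + a2 * s^2) - pi * t) 0) * indicator {0..} s \<partial>lborel)"
proof -
  have "(\<integral>z. max (Hp a0 a1 a2 (rsq z) - t) 0 \<partial>lborel)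
      = pi * (\<integral>s. indicator {0..} s * max (Hp a0 a1 a2 s - t) 0 \<partial>lborel)"
    by (rule radial_integral[where H="\<lambda>s. max (Hp a0 a1 a2 s - t) 0"]) measurable
  also have "\<dots> = (\<integral>s. pi * (indicator {0..} s * max (Hp a0 a1 a2 s - t) 0) \<partial>lborel)"
    by simp
  also have "\<dots> = (\<integral>s. indicator {0..} s * max (exp (-s) * (a0 + a1 * s + a2 * s^2) - pi * t) 0 \<partial>lborel)"
  proof (rule Bochner_Integration.integral_cong)
    fix s :: real
    have "pi * max (Hp a0 a1 a2 s - t) 0 = max (exp (-s) * (a0 + a1 * s + a2 * s^2) - pi * t) 0"
      using pi_gt_zero unfolding Hp_def by (simp add: max_def field_simps)
    then show "pi * (indicator {0..} s * max (Hp a0 a1 a2 s - t) 0) =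
        indicator {0..} s * max (exp (-s) * (a0 + a1 * s + a2 * s^2) - pi * t) 0"
      by (simp add: indicator_def)
  qed simp
  also have "\<dots> = enn2real (\<integral>\<^sup>+s. ennreal (indicator {0..} s * max (exp (-s) * (a0 + a1 * s + a2 * s^2) - pi * t) 0) \<partial>lborel)"
    by (rule integral_eq_nn_integral) (auto simp: indicator_def)
  also have "\<dots> = enn2real (\<integral>\<^sup>+s. ennreal (max (exp (-s) * (a0 + a1 * s + a2 * s^2) - pi * t) 0) * indicator {0..} s \<partial>lborel)"
    by (intro arg_cong[where f=enn2real] nn_integral_cong) (auto simp: indicator_def)
  finally show ?thesis .
qed

lemma W0_Hp: "W0 = (\<lambda>z. Hp 1 0 0 (rsq z))"
  by (auto simp: W0_def Hp_def)

lemma glue: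
  fixes a0 a1 a2 :: real
  assumes sum1: "a0 + a1 + 2*a2 = 1"
    and nn: "\<And>s. 0 \<le> s \<Longrightarrow> 0 \<le> a0 + a1 * s + a2 * s^2"
    and dom: "\<And>s. 0 \<le> s \<Longrightarrow> 0 \<le> a1 + 2*a2 + 2*a2 * s"
    and pos: "\<And>s. 0 \<le> s \<Longrightarrow> 0 < 1 + (a1 + 2*a2) * s + a2 * s^2"
    and f: "f = (\<lambda>z. Hp a0 a1 a2 (rsq z))"
  shows "majorizes W0 f"
  unfolding majorizes_def
proof (intro conjI allI impI)
  show "integrable lborel W0" "integrable lborel f"
    using prof_int[of 1 0 0] prof_int[of a0 a1 a2] unfolding W0_Hp f by auto
  show "integral\<^sup>L lborel W0 = integral\<^sup>L lborel f"
    using prof_int[of 1 0 0] prof_int[of a0 a1 a2] sum1 unfolding W0_Hp f by auto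
  fix t :: real assume t: "0 \<le> t"
  show "(\<integral>z. max (f z - t) 0 \<partial>lborel) \<le> (\<integral>z. max (W0 z - t) 0 \<partial>lborel)"
  proof (cases "t = 0")
    case True
    have fnn: "\<And>z. 0 \<le> f z" unfolding f Hp_def using nn[OF rsq_ge0] by simp
    have wnn: "\<And>z. 0 \<le> W0 z" unfolding W0_def by simp
    have e1: "(\<lambda>z. max (f z - t) 0) = f"
    proof
      fix z show "max (f z - t) 0 = f z" using fnn[of z] True by simp
    qed
    have e2: "(\<lambda>z. max (W0 z - t) 0) = W0"
    proof
      fix z show "max (W0 z - t) 0 = W0 z" using wnn[of z] True by simp
    qed
    show ?thesis
      unfolding e1 e2 using prof_int[of 1 0 0] prof_int[of a0 a1 a2] sum1
      unfolding W0_Hp f by simp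
  next
    case False
    then have tau: "0 < pi * t" using t by simp
    have le: "(\<integral>\<^sup>+s. ennreal (max (exp (-s) * (a0 + a1 * s + a2 * s^2) - pi * t) 0) * indicator {0..} s \<partial>lborel)
       \<le> (\<integral>\<^sup>+s. ennreal (max (exp (-s) - pi * t) 0) * indicator {0..} s \<partial>lborel)"
      by (rule poly_cmp[OF tau sum1 nn dom pos])
    have eq0: "(\<lambda>s::real. exp (-s) * (1 + 0 * s + 0 * s^2)) = (\<lambda>s. exp (-s))" by simp
    have fin: "(\<integral>\<^sup>+s. ennreal (max (exp (-s) - pi * t) 0) * indicator {0..} s \<partial>lborel) < top"
      using exp_nn_fin[OF tau] by simp
    show ?thesis
      unfolding W0_Hp f max_2d using enn2real_mono[OF le fin] by simp
  qed
qed

lemma Wb_maj: "majorizes W0 Wb"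
  by (rule glue[of 0 1 0]) (auto simp: Wb_def Hp_def fun_eq_iff)

lemma Wd_maj: "majorizes W0 Wd"
proof (rule glue[of 0 0 "1/2"])
  fix s :: real assume s: "0 \<le> s"
  show "0 < 1 + (0 + 2 * (1/2)) * s + 1/2 * s^2" using s by (simp add: add_pos_nonneg)
qed (auto simp: Wd_def Hp_def fun_eq_iff)

lemma Wc_maj: "majorizes W0 Wc"
proof (rule glue[of 1 "-2" 1])
  fix s :: real assume s: "0 \<le> s"
  have "1 + (-2) * s + 1 * s^2 = (s-1)^2" by (simp add: power2_eq_square algebra_simps)
  then show "0 \<le> 1 + (-2) * s + 1 * s^2" by simp
  show "0 \<le> -2 + 2 * 1 + 2 * 1 * s" using s by simp
  show "0 < 1 + (-2 + 2 * 1) * s + 1 * s^2" by (simp add: add_pos_nonneg)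
next
  show "Wc = (\<lambda>z. Hp 1 (-2) 1 (rsq z))"
    by (auto simp: Wc_def Hp_def fun_eq_iff power2_eq_square algebra_simps)
qed simp

lemma Vt_maj:
  fixes t :: real assumes t0: "0 \<le> t" and t1: "t \<le> 1"
  shows "majorizes W0 (Vt t)"
proof -
  define k where "k = sqrt ((1 - t) / (1 + t))"
  have tp: "0 < 1 + t" using t0 by simp
  have k0: "0 \<le> k" unfolding k_def using t1 tp by simp
  have k2: "k^2 = (1 - t) / (1 + t)" unfolding k_def using t1 tp by simp
  show ?thesis
  proof (rule glue[of "(t+1)/2*(k-1)^2" "(t+1)*(k-1)" "(t+1)/2"])
    have "(t+1)/2*(k-1)^2 + (t+1)*(k-1) + 2*((t+1)/2) = (t+1)/2 * (k^2 + 1)"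
      by (simp add: power2_eq_square field_simps)
    also have "\<dots> = 1" unfolding k2 using tp by (simp add: field_simps)
    finally show "(t+1)/2*(k-1)^2 + (t+1)*(k-1) + 2*((t+1)/2) = 1" .
  next
    fix s :: real assume s: "0 \<le> s"
    have "(t+1)/2*(k-1)^2 + (t+1)*(k-1) * s + (t+1)/2 * s^2 = (t+1)/2 * (s - 1 + k)^2"
      by (simp add: power2_eq_square field_simps)
    moreover have "0 \<le> (t+1)/2 * (s - 1 + k)^2" using tp by simp
    ultimately show "0 \<le> (t+1)/2*(k-1)^2 + (t+1)*(k-1) * s + (t+1)/2 * s^2" by linarith
    have "(t+1)*(k-1) + 2*((t+1)/2) + 2*((t+1)/2) * s = (t+1) * (k + s)"
      by (simp add: field_simps)
    then show "0 \<le> (t+1)*(k-1) + 2*((t+1)/2) + 2*((t+1)/2) * s" using tp k0 s by simp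
    have "1 + ((t+1)*(k-1) + 2*((t+1)/2)) * s + (t+1)/2 * s^2 = 1 + ((t+1) * k * s + (t+1)/2 * s^2)"
      by (simp add: field_simps)
    moreover have "0 \<le> (t+1) * k * s + (t+1)/2 * s^2" using tp k0 s by simp
    ultimately show "0 < 1 + ((t+1)*(k-1) + 2*((t+1)/2)) * s + (t+1)/2 * s^2" by linarith
  next
    show "Vt t = (\<lambda>z. Hp ((t+1)/2*(k-1)^2) ((t+1)*(k-1)) ((t+1)/2) (rsq z))"
      by (auto simp: Vt_def Hp_def fun_eq_iff k_def[symmetric] power2_eq_square field_simps)
  qed
qed

theorem mainTheorem10:
  shows "majorizes W0 Wb \<and> majorizes W0 Wc \<and> majorizes W0 Wd \<and>
         (\<forall>t::real. 0 \<le> t \<and> t \<le> 1 \<longrightarrow> majorizes W0 (Vt t))"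
  using Wb_maj Wc_maj Wd_maj Vt_maj by blast

end
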